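(* Consider the finite game with players $\mathcal{M}=\{1,\dots,M\}$, common action set $\mathcal{N}$ and tolled costs $\bar c_i(\mathbf{a})=\sum_{l\in\mathcal{M}_{a_i}(\mathbf{a})}\frac{\sigma^2}{h_{la_i}}\frac{\beta_l}{[1-S_i(\mathbf{a})]^+}-\sum_{l\in\mathcal{M}_{a_i}(\mathbf{a})\setminus\{i\}}\frac{\sigma^2}{h_{la_i}}\frac{\beta_l}{[1-S_i(\mathbf{a})+\beta_i]^+}$, where $S_i(\mathbf{a})=\sum_{k\in\mathcal{M}_{a_i}(\mathbf{a})}\beta_k$, and suppose $h_{ij}=h_j$ and $\beta_i=\beta$ for all $i\in\mathcal{M}$, $j\in\mathcal{N}$. Then every Nash equilibrium of this game is system optimal, i.e., minimizes $C(\mathbf{a})=\sum_{i\in\mathcal{M}}\frac{\sigma^2}{h_{ia_i}}\frac{\beta_i}{[1-S_i(\mathbf{a})]^+}$ over all $\mathbf{a}\in\mathcal{N}^M$.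
   Context: Uplink cellular model: mobiles $\mathcal{M}=\{1,\dots,M\}$, BSs $\mathcal{N}=\{1,\dots,N\}$, power gains $h_{ij}>0$, noise power $\sigma^2>0$, target SINRs $\gamma_i>0$, $\beta_i=\gamma_i/(1+\gamma_i)$. Association profile $\mathbf{a}\in\mathcal{N}^M$, $\mathcal{M}_j(\mathbf{a})=\{l: a_l=j\}$, $[x]^+=\max(x,0)$, positive$/0=+\infty$, and $\bar c_i(\mathbf{a})=+\infty$ whenever its first sum is infinite. $(b,\mathbf{a}_{-i})$ replaces $a_i$ by $b$. $\mathbf{a}$ is a Nash equilibrium if $a_i\in\arg\min_{b\in\mathcal{N}}\bar c_i(b,\mathbf{a}_{-i})$ for all $i$. Standing assumption: there exists at least one feasible association, i.e. some $\mathbf{a}$ with $\sum_{l\in\mathcal{M}_j(\mathbf{a})}\beta_l<1$ for all $j$. *)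

theory Defs
  imports "HOL-Analysis.Analysis"
begin

text \<open>Players are the elements of a finite type 'm, base stations those of a finite
type 'n; an association profile is a function a :: 'm => 'n.\<close>

definition pos_part :: "real \<Rightarrow> real" where
  "pos_part x = max x 0"

text \<open>Division with the convention positive / 0 = +infinity (numerators used are positive).\<close>
definition pdiv :: "real \<Rightarrow> real \<Rightarrow> ereal" where
  "pdiv x y = (if y = 0 then \<infinity> else ereal (x / y))"

definition beta :: "('m \<Rightarrow> real) \<Rightarrow> 'm \<Rightarrow> real" where
  "beta gamma i = gamma i / (1 + gamma i)"

definition Mset :: "('m \<Rightarrow> 'n) \<Rightarrow> 'n \<Rightarrow> 'm set" where
  "Mset a j = {l. a l = j}"

definition Sload :: "('m \<Rightarrow> real) \<Rightarrow> ('m \<Rightarrow> 'n) \<Rightarrow> 'm \<Rightarrow> real" where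
  "Sload gamma a i = (\<Sum>k\<in>Mset a (a i). beta gamma k)"

definition feasible :: "('m \<Rightarrow> real) \<Rightarrow> ('m \<Rightarrow> 'n) \<Rightarrow> bool" where
  "feasible gamma a \<longleftrightarrow> (\<forall>j. (\<Sum>l\<in>Mset a j. beta gamma l) < 1)"

definition cbar :: "('m \<Rightarrow> 'n \<Rightarrow> real) \<Rightarrow> real \<Rightarrow> ('m \<Rightarrow> real) \<Rightarrow> 'm \<Rightarrow> ('m \<Rightarrow> 'n) \<Rightarrow> ereal" where
  "cbar h sigma2 gamma i a =
    (let j = a i; S = Sload gamma a i;
         first = (\<Sum>l\<in>Mset a j. pdiv (sigma2 / h l j * beta gamma l) (pos_part (1 - S)));
         second = (\<Sum>l\<in>Mset a j - {i}. pdiv (sigma2 / h l j * beta gamma l) (pos_part (1 - S + beta gamma i)))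
     in if first = \<infinity> then \<infinity> else first - second)"

definition nash_eq :: "('m \<Rightarrow> 'n \<Rightarrow> real) \<Rightarrow> real \<Rightarrow> ('m \<Rightarrow> real) \<Rightarrow> ('m \<Rightarrow> 'n) \<Rightarrow> bool" where
  "nash_eq h sigma2 gamma a \<longleftrightarrow>
     (\<forall>i b. cbar h sigma2 gamma i a \<le> cbar h sigma2 gamma i (a(i := b)))"

definition Ccost :: "('m::finite \<Rightarrow> 'n \<Rightarrow> real) \<Rightarrow> real \<Rightarrow> ('m \<Rightarrow> real) \<Rightarrow> ('m \<Rightarrow> 'n) \<Rightarrow> ereal" where
  "Ccost h sigma2 gamma a =
     (\<Sum>i\<in>UNIV. pdiv (sigma2 / h i (a i) * beta gamma i) (pos_part (1 - Sload gamma a i)))"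

end

theory Submission
  imports Defs
begin

lemma marg_mono:
  fixes f :: "nat \<Rightarrow> real"
  assumes Pdown': "\<forall>k k'. k' \<le> k \<longrightarrow> P k \<longrightarrow> P k'"
    and conv': "\<forall>k. P (Suc (Suc k)) \<longrightarrow> f (Suc k) - f k \<le> f (Suc (Suc k)) - f (Suc k)"
  shows "n \<le> k \<Longrightarrow> P (Suc k) \<Longrightarrow> f (Suc n) - f n \<le> f (Suc k) - f k"
proof (induction k)
  note Pdown = Pdown'[rule_format] and conv = conv'[rule_format]
  case 0
  then show ?case by simp
next
  case (Suc k)
  note Pdown = Pdown'[rule_format] and conv = conv'[rule_format]
  show ?case
  proof (cases "n = Suc k")
    case True then show ?thesis by simp
  next
    case False
    then have "n \<le> k" using Suc.prems by simp
    moreover have "P (Suc k)" using Pdown[OF _ Suc.prems(2)] by simp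
    ultimately have "f (Suc n) - f n \<le> f (Suc k) - f k" using Suc.IH by simp
    also have "\<dots> \<le> f (Suc (Suc k)) - f (Suc k)" using conv Suc.prems(2) by simp
    finally show ?thesis .
  qed
qed

lemma up_bound:
  fixes f :: "nat \<Rightarrow> real"
  assumes Pdown: "\<And>k k'. k' \<le> k \<Longrightarrow> P k \<Longrightarrow> P k'"
    and conv: "\<And>k. P (Suc (Suc k)) \<Longrightarrow> f (Suc k) - f k \<le> f (Suc (Suc k)) - f (Suc k)"
    and nm: "n \<le> m" and Pm: "P m"
  shows "f m - f n \<ge> (real m - real n) * (f (Suc n) - f n)"
proof -
  have "f m - f n = (\<Sum>k = n..<m. f (Suc k) - f k)" using sum_Suc_diff'[OF nm, of f] by simp
  also have "\<dots> \<ge> (\<Sum>k = n..<m. f (Suc n) - f n)"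
  proof (rule sum_mono)
    fix k assume "k \<in> {n..<m}"
    then have "n \<le> k" "Suc k \<le> m" by auto
    then show "f (Suc n) - f n \<le> f (Suc k) - f k"
      using marg_mono[of P f n k] Pdown Pm conv by blast
  qed
  ultimately show ?thesis using nm by (simp add: of_nat_diff)
qed

lemma down_bound:
  fixes f :: "nat \<Rightarrow> real"
  assumes Pdown: "\<And>k k'. k' \<le> k \<Longrightarrow> P k \<Longrightarrow> P k'"
    and conv: "\<And>k. P (Suc (Suc k)) \<Longrightarrow> f (Suc k) - f k \<le> f (Suc (Suc k)) - f (Suc k)"
    and nm: "m \<le> n" and Pn: "P n" and n1: "1 \<le> n"
  shows "f n - f m \<le> (real n - real m) * (f n - f (n - 1))"
proof -
  have "f n - f m = (\<Sum>k = m..<n. f (Suc k) - f k)" using sum_Suc_diff'[OF nm, of f] by simp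
  also have "\<dots> \<le> (\<Sum>k = m..<n. f n - f (n - 1))"
  proof (rule sum_mono)
    fix k assume "k \<in> {m..<n}"
    then have "k \<le> n - 1" by auto
    moreover have "Suc (n - 1) = n" using n1 by simp
    moreover have "f (Suc k) - f k \<le> f (Suc (n - 1)) - f (n - 1)"
      using \<open>k \<le> n - 1\<close> \<open>Suc (n - 1) = n\<close>
      using marg_mono[of P f k "n - 1"] Pdown Pn conv by simp
    ultimately show "f (Suc k) - f k \<le> f n - f (n - 1)" by simp
  qed
  finally show ?thesis using nm by (simp add: of_nat_diff)
qed

lemma sep_exists:
  fixes A B :: "real set"
  assumes "finite A" "finite B" "\<And>x y. x \<in> A \<Longrightarrow> y \<in> B \<Longrightarrow> x \<le> y"
  shows "\<exists>t. (\<forall>x\<in>A. x \<le> t) \<and> (\<forall>y\<in>B. t \<le> y)"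
proof (cases "A = {}")
  case True then show ?thesis
    by (metis assms(2) Min_le empty_iff)
next
  case False
  then show ?thesis using assms
    by (metis Max_ge Max_in)
qed

lemma exchange:
  fixes g :: "'n::finite \<Rightarrow> nat \<Rightarrow> real" and n m :: "'n \<Rightarrow> nat"
  assumes Pdown: "\<And>k k'. k' \<le> k \<Longrightarrow> P k \<Longrightarrow> P k'"
    and conv: "\<And>j k. P (Suc (Suc k)) \<Longrightarrow> g j (Suc k) - g j k \<le> g j (Suc (Suc k)) - g j (Suc k)"
    and Pn: "\<And>j. P (n j)" and Pm: "\<And>j. P (m j)"
    and sums: "(\<Sum>j\<in>UNIV. n j) = (\<Sum>j\<in>UNIV. m j)"
    and nash: "\<And>j b. 1 \<le> n j \<Longrightarrow> b \<noteq> j \<Longrightarrow> P (Suc (n b)) \<Longrightarrow>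
                 g j (n j) - g j (n j - 1) \<le> g b (Suc (n b)) - g b (n b)"
  shows "(\<Sum>j\<in>UNIV. g j (n j)) \<le> (\<Sum>j\<in>UNIV. g j (m j))"
proof -
  define A where "A = (\<lambda>j. g j (n j) - g j (n j - 1)) ` {j. m j < n j}"
  define B where "B = (\<lambda>j. g j (Suc (n j)) - g j (n j)) ` {j. n j < m j}"
  have "\<exists>t. (\<forall>x\<in>A. x \<le> t) \<and> (\<forall>y\<in>B. t \<le> y)"
  proof (rule sep_exists)
    show "finite A" "finite B" unfolding A_def B_def by auto
    fix x y assume "x \<in> A" "y \<in> B"
    then obtain j b where j: "m j < n j" "x = g j (n j) - g j (n j - 1)"
      and b: "n b < m b" "y = g b (Suc (n b)) - g b (n b)"
      unfolding A_def B_def by auto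
    have "P (Suc (n b))" using Pdown[OF _ Pm[of b]] b(1) by simp
    moreover have "b \<noteq> j" using j b by auto
    ultimately show "x \<le> y" using nash[of j b] j b by simp
  qed
  then obtain t where tA: "\<And>x. x \<in> A \<Longrightarrow> x \<le> t" and tB: "\<And>y. y \<in> B \<Longrightarrow> t \<le> y" by blast
  have each: "(real (m j) - real (n j)) * t \<le> g j (m j) - g j (n j)" for j
  proof (cases "m j < n j")
    case True
    then have "g j (n j) - g j (n j - 1) \<le> t" using tA unfolding A_def by auto
    moreover have "g j (n j) - g j (m j) \<le> (real (n j) - real (m j)) * (g j (n j) - g j (n j - 1))"
      using down_bound[where P=P and f="g j" and m="m j" and n="n j", OF Pdown conv] Pn True by simp
    moreover have "real (n j) - real (m j) \<ge> 0" using True by simp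
    ultimately have "g j (n j) - g j (m j) \<le> (real (n j) - real (m j)) * t"
      by (meson mult_left_mono order_trans)
    then show ?thesis by (simp add: algebra_simps)
  next
    case False
    show ?thesis
    proof (cases "n j < m j")
      case True
      then have "t \<le> g j (Suc (n j)) - g j (n j)" using tB unfolding B_def by auto
      moreover have "g j (m j) - g j (n j) \<ge> (real (m j) - real (n j)) * (g j (Suc (n j)) - g j (n j))"
        using up_bound[where P=P and f="g j" and m="m j" and n="n j", OF Pdown conv] Pm True by simp
      moreover have "real (m j) - real (n j) \<ge> 0" using True by simp
      ultimately show ?thesis by (meson mult_left_mono order_trans)
    next
      case False2: False
      then have "m j = n j" using False by simp
      then show ?thesis by simp
    qed
  qed
  have "(\<Sum>j\<in>UNIV. (real (m j) - real (n j)) * t) = (real (\<Sum>j\<in>UNIV. m j) - real (\<Sum>j\<in>UNIV. n j)) * t"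
    by (simp add: sum_subtractf sum_distrib_right[symmetric])
  also have "\<dots> = 0" using sums by simp
  finally have "0 \<le> (\<Sum>j\<in>UNIV. g j (m j) - g j (n j))"
    using sum_mono[of UNIV "\<lambda>j. (real (m j) - real (n j)) * t" "\<lambda>j. g j (m j) - g j (n j)"] each
    by simp
  then show ?thesis by (simp add: sum_subtractf)
qed

definition gg :: "real \<Rightarrow> real \<Rightarrow> nat \<Rightarrow> real" where
  "gg bb c k = real k * c / (1 - real k * bb)"

lemma Sload_eq:
  fixes x :: "'m::finite \<Rightarrow> 'n"
  assumes hb: "\<And>l. beta gamma l = bb"
  shows "Sload gamma x i = real (card (Mset x (x i))) * bb"
  unfolding Sload_def using hb by simp

lemma cbar_eq:
  fixes x :: "'m::finite \<Rightarrow> 'n" and h :: "'m \<Rightarrow> 'n \<Rightarrow> real"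
  assumes hb: "\<And>l. beta gamma l = bb" and hh: "\<And>l j. h l j = hh j"
    and bbpos: "0 < bb"
  shows "cbar h sigma2 gamma i x =
    (if real (card (Mset x (x i))) * bb < 1
     then ereal (gg bb (sigma2 / hh (x i) * bb) (card (Mset x (x i)))
               - gg bb (sigma2 / hh (x i) * bb) (card (Mset x (x i)) - 1))
     else \<infinity>)"
proof -
  define j where "j = x i"
  define k where "k = card (Mset x j)"
  define c where "c = sigma2 / hh j * bb"
  have iin: "i \<in> Mset x j" unfolding Mset_def j_def by simp
  have fin: "finite (Mset x j)" by simp
  have k1: "1 \<le> k" unfolding k_def using iin fin
    by (metis One_nat_def Suc_leI card_gt_0_iff empty_iff)
  have S: "Sload gamma x i = real k * bb" unfolding k_def j_def by (rule Sload_eq[OF hb])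
  define first where "first = (\<Sum>l\<in>Mset x j. pdiv c (pos_part (1 - real k * bb)))"
  define second where "second = (\<Sum>l\<in>Mset x j - {i}. pdiv c (pos_part (1 - real k * bb + bb)))"
  have cb: "cbar h sigma2 gamma i x = (if first = \<infinity> then \<infinity> else first - second)"
    unfolding cbar_def first_def second_def c_def Let_def S using hb hh j_def by simp
  show ?thesis
  proof (cases "real k * bb < 1")
    case True
    have pp: "pos_part (1 - real k * bb) = 1 - real k * bb" unfolding pos_part_def using True by simp
    have "first = (\<Sum>l\<in>Mset x j. ereal (c / (1 - real k * bb)))"
      unfolding first_def pp pdiv_def using True by simp
    also have "\<dots> = ereal (gg bb c k)" unfolding gg_def k_def by simp
    finally have f: "first = ereal (gg bb c k)" .
    have rk: "real (k - 1) = real k - 1" using k1 by (simp add: of_nat_diff)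
    have pp2: "pos_part (1 - real k * bb + bb) = 1 - real (k - 1) * bb"
      unfolding pos_part_def rk using True bbpos by (simp add: algebra_simps)
    have pos2: "1 - real (k - 1) * bb > 0" using True bbpos rk by (simp add: algebra_simps)
    have "second = (\<Sum>l\<in>Mset x j - {i}. ereal (c / (1 - real (k - 1) * bb)))"
      unfolding second_def pp2 pdiv_def using pos2 by simp
    also have "\<dots> = ereal (gg bb c (k - 1))" unfolding gg_def k_def
      using iin fin by (simp add: card_Diff_singleton)
    finally have s2: "second = ereal (gg bb c (k - 1))" .
    show ?thesis using True cb f s2 unfolding k_def c_def j_def by simp
  next
    case False
    have pp: "pos_part (1 - real k * bb) = 0" unfolding pos_part_def using False by simp
    have "first = \<infinity>" unfolding first_def pp pdiv_def using iin fin
      by (auto simp add: sum_Pinfty)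
    then show ?thesis using False cb unfolding k_def c_def j_def by simp
  qed
qed


lemma count_sum:
  fixes x :: "'m::finite \<Rightarrow> 'n::finite"
  shows "(\<Sum>j\<in>UNIV. card (Mset x j)) = CARD('m)"
proof -
  have "(\<Sum>j\<in>UNIV. card (Mset x j)) = (\<Sum>j\<in>UNIV. \<Sum>i\<in>{i. i \<in> UNIV \<and> x i = j}. (1::nat))"
    unfolding Mset_def by simp
  also have "\<dots> = (\<Sum>i\<in>(UNIV::'m set). (1::nat))" by (rule sum.group[of UNIV UNIV x "\<lambda>_. (1::nat)"]) auto
  finally show ?thesis by simp
qed

lemma Ccost_feas:
  fixes x :: "'m::finite \<Rightarrow> 'n::finite" and h :: "'m \<Rightarrow> 'n \<Rightarrow> real"
  assumes hb: "\<And>l. beta gamma l = bb" and hh: "\<And>l j. h l j = hh j"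
    and feasx: "\<And>j. real (card (Mset x j)) * bb < 1"
  shows "Ccost h sigma2 gamma x = ereal (\<Sum>j\<in>UNIV. gg bb (sigma2 / hh j * bb) (card (Mset x j)))"
proof -
  define \<phi> where "\<phi> j = sigma2 / hh j * bb / (1 - real (card (Mset x j)) * bb)" for j
  have "Ccost h sigma2 gamma x = (\<Sum>i\<in>UNIV. ereal (\<phi> (x i)))"
    unfolding Ccost_def
  proof (rule sum.cong)
    fix i :: 'm
    have pp: "pos_part (1 - Sload gamma x i) = 1 - real (card (Mset x (x i))) * bb"
      unfolding Sload_eq[OF hb] pos_part_def using feasx[of "x i"] by simp
    show "pdiv (sigma2 / h i (x i) * beta gamma i) (pos_part (1 - Sload gamma x i)) = ereal (\<phi> (x i))"
      unfolding pp pdiv_def \<phi>_def using feasx[of "x i"] hb hh by simp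
  qed simp
  also have "\<dots> = ereal (\<Sum>i\<in>UNIV. \<phi> (x i))" by simp
  also have "(\<Sum>i\<in>UNIV. \<phi> (x i)) = (\<Sum>j\<in>UNIV. \<Sum>i\<in>{i. i \<in> UNIV \<and> x i = j}. \<phi> (x i))"
    by (rule sum.group[of UNIV UNIV x "\<lambda>i. \<phi> (x i)", symmetric]) auto
  also have "\<dots> = (\<Sum>j\<in>UNIV. gg bb (sigma2 / hh j * bb) (card (Mset x j)))"
  proof (rule sum.cong)
    fix j
    have "(\<Sum>i\<in>{i. i \<in> UNIV \<and> x i = j}. \<phi> (x i)) = (\<Sum>i\<in>Mset x j. \<phi> j)"
      unfolding Mset_def by (rule sum.cong) auto
    then show "(\<Sum>i\<in>{i. i \<in> UNIV \<and> x i = j}. \<phi> (x i)) = gg bb (sigma2 / hh j * bb) (card (Mset x j))"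
      unfolding gg_def \<phi>_def by simp
  qed simp
  finally show ?thesis .
qed

lemma Ccost_inf:
  fixes x :: "'m::finite \<Rightarrow> 'n::finite" and h :: "'m \<Rightarrow> 'n \<Rightarrow> real"
  assumes hb: "\<And>l. beta gamma l = bb" and hh: "\<And>l j. h l j = hh j"
    and inf: "\<not> real (card (Mset x j)) * bb < 1" and bbpos: "0 < bb"
  shows "Ccost h sigma2 gamma x = \<infinity>"
proof -
  have "card (Mset x j) \<noteq> 0" using inf by auto
  then obtain i where i: "i \<in> Mset x j" by (metis card.empty ex_in_conv)
  then have xi: "x i = j" unfolding Mset_def by simp
  have "pos_part (1 - Sload gamma x i) = 0"
    unfolding Sload_eq[OF hb] pos_part_def xi using inf by simp
  then have "pdiv (sigma2 / h i (x i) * beta gamma i) (pos_part (1 - Sload gamma x i)) = \<infinity>"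
    unfolding pdiv_def by simp
  then show ?thesis unfolding Ccost_def by (auto simp add: sum_Pinfty)
qed


lemma gg_diff:
  assumes "real (Suc k) * bb < 1" "0 < bb"
  shows "gg bb c (Suc k) - gg bb c k = c / ((1 - real k * bb) * (1 - real (Suc k) * bb))"
proof -
  have a: "1 - real k * bb > 0" "1 - real (Suc k) * bb > 0" using assms by (auto simp: algebra_simps)
  then show ?thesis unfolding gg_def
    by (simp add: field_simps)
qed

lemma gg_conv:
  assumes "real (Suc (Suc k)) * bb < 1" "0 < bb" "0 < c"
  shows "gg bb c (Suc k) - gg bb c k \<le> gg bb c (Suc (Suc k)) - gg bb c (Suc k)"
proof -
  have s1: "real (Suc k) * bb < 1" using assms by (auto simp: algebra_simps)
  have p: "1 - real k * bb > 0" "1 - real (Suc k) * bb > 0" "1 - real (Suc (Suc k)) * bb > 0"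
    using assms s1 by (auto simp: algebra_simps)
  have le: "(1 - real (Suc k) * bb) * (1 - real (Suc (Suc k)) * bb) \<le> (1 - real k * bb) * (1 - real (Suc k) * bb)"
  proof -
    have "1 - real (Suc (Suc k)) * bb \<le> 1 - real k * bb" using assms by (simp add: mult_right_mono)
    from mult_left_mono[OF this, of "1 - real (Suc k) * bb"] p
    show ?thesis by (simp add: mult.commute)
  qed
  have "c / ((1 - real k * bb) * (1 - real (Suc k) * bb)) \<le> c / ((1 - real (Suc k) * bb) * (1 - real (Suc (Suc k)) * bb))"
    using le p assms by (intro divide_left_mono) auto
  then show ?thesis using gg_diff[OF s1 assms(2)] gg_diff[OF assms(1,2)] by simp
qed


theorem proposition15:
  fixes h :: "'m::finite \<Rightarrow> 'n::finite \<Rightarrow> real"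
    and sigma2 :: real and gamma :: "'m \<Rightarrow> real"
    and a :: "'m \<Rightarrow> 'n"
  assumes h_pos: "\<And>i j. h i j > 0"
    and sigma_pos: "sigma2 > 0"
    and gamma_pos: "\<And>i. gamma i > 0"
    and feas: "\<exists>a0 :: 'm \<Rightarrow> 'n. feasible gamma a0"
    and h_hom: "\<And>i i' j. h i j = h i' j"
    and beta_hom: "\<And>i i'. beta gamma i = beta gamma i'"
    and ne: "nash_eq h sigma2 gamma a"
  shows "\<forall>a'. Ccost h sigma2 gamma a \<le> Ccost h sigma2 gamma a'"
proof
  fix a' :: "'m \<Rightarrow> 'n"
  obtain i0 :: 'm where True by simp
  define bb where "bb = beta gamma i0"
  have hb: "\<And>l. beta gamma l = bb" using beta_hom bb_def by simp
  have bbpos: "0 < bb" unfolding bb_def beta_def using gamma_pos[of i0]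
    by (simp add: add_pos_pos)
  define hh where "hh j = h i0 j" for j
  have hh: "\<And>l j. h l j = hh j" using h_hom hh_def by simp
  have hhpos: "\<And>j. hh j > 0" using h_pos hh_def by simp
  define P where "P k \<longleftrightarrow> real k * bb < 1" for k
  define G where "G j = gg bb (sigma2 / hh j * bb)" for j
  define n where "n j = card (Mset a j)" for j
  have Pdown: "\<And>k k'. k' \<le> k \<Longrightarrow> P k \<Longrightarrow> P k'"
    unfolding P_def using bbpos by (meson le_less_trans mult_right_mono of_nat_le_iff less_imp_le)
  have conv: "\<And>j k. P (Suc (Suc k)) \<Longrightarrow> G j (Suc k) - G j k \<le> G j (Suc (Suc k)) - G j (Suc k)"
    unfolding P_def G_def using bbpos hhpos sigma_pos by (intro gg_conv) auto
  have cb: "cbar h sigma2 gamma i x = (if P (card (Mset x (x i)))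
       then ereal (G (x i) (card (Mset x (x i))) - G (x i) (card (Mset x (x i)) - 1)) else \<infinity>)"
    for i and x :: "'m \<Rightarrow> 'n"
    unfolding P_def G_def by (rule cbar_eq[OF hb hh bbpos])
  have dev: "card (Mset (a(i := b)) b) = Suc (n b)" if "b \<noteq> a i" for i b
  proof -
    have "Mset (a(i := b)) b = insert i (Mset a b)" unfolding Mset_def by auto
    moreover have "i \<notin> Mset a b" unfolding Mset_def using that by auto
    ultimately show ?thesis unfolding n_def by simp
  qed
  have nashi: "cbar h sigma2 gamma i a \<le> cbar h sigma2 gamma i (a(i := b))" for i b
    using ne unfolding nash_eq_def by blast
  have cbdev: "cbar h sigma2 gamma i (a(i := b)) = (if P (Suc (n b))
       then ereal (G b (Suc (n b)) - G b (n b)) else \<infinity>)" if "b \<noteq> a i" for i b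
    using cb[of i "a(i := b)"] dev[OF that] by simp
  have cba: "cbar h sigma2 gamma i a = (if P (n (a i))
       then ereal (G (a i) (n (a i)) - G (a i) (n (a i) - 1)) else \<infinity>)" for i
    using cb[of i a] unfolding n_def by simp
  have memb: "\<exists>i. a i = j" if "1 \<le> n j" for j
  proof -
    have "Mset a j \<noteq> {}" using that unfolding n_def by auto
    then show ?thesis unfolding Mset_def by auto
  qed
  have sum_n: "(\<Sum>j\<in>UNIV. n j) = CARD('m)" unfolding n_def by (rule count_sum)
  have Pn: "P (n j)" for j
  proof (rule ccontr)
    assume np: "\<not> P (n j)"
    then have "1 \<le> n j" unfolding P_def by (cases "n j") auto
    then obtain i where ai: "a i = j" using memb by blast
    have inf: "cbar h sigma2 gamma i a = \<infinity>" using cba[of i] np ai by simp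
    have nb: "\<not> P (Suc (n b))" if "b \<noteq> j" for b
    proof
      assume "P (Suc (n b))"
      then have "cbar h sigma2 gamma i (a(i := b)) \<noteq> \<infinity>" using cbdev[of b i] that ai by simp
      then show False using nashi[of i b] inf by simp
    qed
    obtain a0 :: "'m \<Rightarrow> 'n" where fa0: "feasible gamma a0" using feas by blast
    define m where "m j = card (Mset a0 j)" for j
    have Pm: "P (m j)" for j
      using fa0 unfolding feasible_def P_def m_def using hb by simp
    have le: "m b \<le> n b" for b
    proof (cases "b = j")
      case True
      then show ?thesis using Pm[of b] np Pdown[of "m j" "n j"] Pdown[of "n j" "m j"] by force
    next
      case False
      then show ?thesis using Pm[of b] nb[OF False] Pdown[of "m b" "Suc (n b)"] Pdown[of "Suc (n b)" "m b"] not_less_eq_eq by force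
    qed
    have lt: "m j < n j" using Pm[of j] np Pdown[of "m j" "n j"] Pdown[of "n j" "m j"] by force
    have "(\<Sum>b\<in>UNIV. m b) < (\<Sum>b\<in>UNIV. n b)"
      by (rule sum_strict_mono_ex1) (use le lt in auto)
    moreover have "(\<Sum>b\<in>UNIV. m b) = CARD('m)" unfolding m_def by (rule count_sum)
    ultimately show False using sum_n by simp
  qed
  have nash: "G j (n j) - G j (n j - 1) \<le> G b (Suc (n b)) - G b (n b)"
    if H: "1 \<le> n j" "b \<noteq> j" "P (Suc (n b))" for j b
  proof -
    obtain i where ai: "a i = j" using memb H(1) by blast
    show ?thesis using nashi[of i b] cba[of i] cbdev[of b i] ai H Pn[of j] by simp
  qed
  have Ca: "Ccost h sigma2 gamma a = ereal (\<Sum>j\<in>UNIV. G j (n j))"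
    unfolding G_def n_def by (rule Ccost_feas[OF hb hh]) (use Pn in \<open>simp add: P_def n_def\<close>)
  show "Ccost h sigma2 gamma a \<le> Ccost h sigma2 gamma a'"
  proof (cases "\<forall>j. P (card (Mset a' j))")
    case True
    define m where "m j = card (Mset a' j)" for j
    have Ca': "Ccost h sigma2 gamma a' = ereal (\<Sum>j\<in>UNIV. G j (m j))"
      unfolding G_def m_def by (rule Ccost_feas[OF hb hh]) (use True in \<open>simp add: P_def\<close>)
    have "(\<Sum>j\<in>UNIV. G j (n j)) \<le> (\<Sum>j\<in>UNIV. G j (m j))"
    proof (rule exchange[where P=P])
      show "\<And>k k'. k' \<le> k \<Longrightarrow> P k \<Longrightarrow> P k'" by (rule Pdown)
      show "\<And>j k. P (Suc (Suc k)) \<Longrightarrow> G j (Suc k) - G j k \<le> G j (Suc (Suc k)) - G j (Suc k)"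
        by (rule conv)
      show "\<And>j. P (n j)" by (rule Pn)
      show "\<And>j. P (m j)" using True m_def by simp
      show "(\<Sum>j\<in>UNIV. n j) = (\<Sum>j\<in>UNIV. m j)" using sum_n count_sum[of a'] m_def by simp
      show "\<And>j b. 1 \<le> n j \<Longrightarrow> b \<noteq> j \<Longrightarrow> P (Suc (n b)) \<Longrightarrow>
                 G j (n j) - G j (n j - 1) \<le> G b (Suc (n b)) - G b (n b)" by (rule nash)
    qed
    then show ?thesis using Ca Ca' by simp
  next
    case False
    then obtain j where "\<not> P (card (Mset a' j))" by blast
    then have "Ccost h sigma2 gamma a' = \<infinity>"
      unfolding P_def by (rule Ccost_inf[OF hb hh _ bbpos])
    then show ?thesis by simp
  qed
qed

end
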